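(* For every $0<\gamma<1/100$ there exists $n_0$ such that for all $n\ge n_0$ the following holds. Suppose $H$ is a $3$-graph of order $n$ with $\delta_2(H)\ge(1/2-\gamma)n$. Let $X,Y$ be any bipartition of $V(H)$ with $|X|,|Y|\ge n/5$. If $H$ is not $3\gamma$-extremal, then $H$ has at least $\gamma^2n^3$ $XXY$-edges and at least $\gamma^2n^3$ $XYY$-edges.
   Context: A $3$-graph is a $3$-uniform hypergraph; $\delta_2(H)$ is the minimum over pairs of distinct vertices of the number of edges containing the pair. An $XXY$-edge is an edge with exactly two vertices in $X$ and one in $Y$; an $XYY$-edge has one vertex in $X$ and two in $Y$. For disjoint $A,B$, $\mathcal B[A,B]$ is the $3$-graph on $A\cup B$ whose edges are all triples with an odd number of vertices in $A$. $H$ $\gamma$-contains $H'$ (same vertex set $V$) if $|E(H')\setminus E(H)|\le\gamma|V|^3$. $H$ on $n$ vertices is $\gamma$-extremal if there is a partition $V(H)=A\cup B$ with $|A|=\lfloor n/2\rfloor$, $|B|=\lceil n/2\rceil$ such that $H$ $\gamma$-contains $\mathcal B[A,B]$. *)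

theory Defs
  imports Complex_Main
begin

definition three_graph :: "'a set \<Rightarrow> 'a set set \<Rightarrow> bool" where
  "three_graph V E \<longleftrightarrow> finite V \<and> (\<forall>e\<in>E. e \<subseteq> V \<and> card e = 3)"

definition codeg :: "'a set set \<Rightarrow> 'a \<Rightarrow> 'a \<Rightarrow> nat" where
  "codeg E x y = card {e\<in>E. x \<in> e \<and> y \<in> e}"

definition min_codeg :: "'a set \<Rightarrow> 'a set set \<Rightarrow> nat" where
  "min_codeg V E = Min {codeg E x y | x y. x \<in> V \<and> y \<in> V \<and> x \<noteq> y}"

definition bip :: "'a set \<Rightarrow> 'a set \<Rightarrow> 'a set set" where
  "bip A B = {e. e \<subseteq> A \<union> B \<and> card e = 3 \<and> odd (card (e \<inter> A))}"

definition gamma_contains :: "real \<Rightarrow> 'a set \<Rightarrow> 'a set set \<Rightarrow> 'a set set \<Rightarrow> bool" where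
  "gamma_contains \<gamma> V E E' \<longleftrightarrow> real (card (E' - E)) \<le> \<gamma> * real (card V) ^ 3"

definition extremal :: "real \<Rightarrow> 'a set \<Rightarrow> 'a set set \<Rightarrow> bool" where
  "extremal \<gamma> V E \<longleftrightarrow> (\<exists>A B. A \<inter> B = {} \<and> A \<union> B = V \<and>
      card A = card V div 2 \<and> card B = card V - card V div 2 \<and>
      gamma_contains \<gamma> V E (bip A B))"

definition num_XXY :: "'a set set \<Rightarrow> 'a set \<Rightarrow> 'a set \<Rightarrow> nat" where
  "num_XXY E X Y = card {e\<in>E. card (e \<inter> X) = 2 \<and> card (e \<inter> Y) = 1}"

end

theory Submission
  imports Defs
begin


definition tri :: "'a set set \<Rightarrow> 'a set \<Rightarrow> 'a set \<Rightarrow> 'a set \<Rightarrow> ('a\<times>'a\<times>'a) set" where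
  "tri E A B C = {(u,w,z). u\<in>A \<and> w\<in>B \<and> z\<in>C \<and> u\<noteq>w \<and> u\<noteq>z \<and> w\<noteq>z \<and> {u,w,z}\<in>E}"
definition ntri :: "'a set set \<Rightarrow> 'a set \<Rightarrow> 'a set \<Rightarrow> 'a set \<Rightarrow> ('a\<times>'a\<times>'a) set" where
  "ntri E A B C = {(u,w,z). u\<in>A \<and> w\<in>B \<and> z\<in>C \<and> u\<noteq>w \<and> u\<noteq>z \<and> w\<noteq>z \<and> {u,w,z}\<notin>E}"
definition dtri :: "'a set \<Rightarrow> 'a set \<Rightarrow> 'a set \<Rightarrow> ('a\<times>'a\<times>'a) set" where
  "dtri A B C = {(u,w,z). u\<in>A \<and> w\<in>B \<and> z\<in>C \<and> u\<noteq>w \<and> u\<noteq>z \<and> w\<noteq>z}"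

lemma dtri_Sigma: "dtri A B C = Sigma A (\<lambda>u. Sigma (B - {u}) (\<lambda>w. C - {u,w}))"
  unfolding dtri_def by auto

lemma tri_Sigma: "tri E A B C = Sigma A (\<lambda>u. Sigma (B - {u}) (\<lambda>w. {z\<in>C - {u,w}. {u,w,z}\<in>E}))"
  unfolding tri_def by auto

lemma card_tri: "finite A \<Longrightarrow> finite B \<Longrightarrow> finite C \<Longrightarrow>
  card (tri E A B C) = (\<Sum>u\<in>A. \<Sum>w\<in>B-{u}. card {z\<in>C - {u,w}. {u,w,z}\<in>E})"
  unfolding tri_Sigma by (subst card_SigmaI) auto

lemma card_dtri_same: assumes "finite A"
  shows "card (dtri A A A) = card A * (card A - 1) * (card A - 2)"
proof -
  have "card (dtri A A A) = (\<Sum>u\<in>A. \<Sum>w\<in>A-{u}. card (A - {u,w}))"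
    unfolding dtri_Sigma using assms by (subst card_SigmaI) auto
  also have "\<dots> = (\<Sum>u\<in>A. \<Sum>w\<in>A-{u}. card A - 2)"
  proof -
    have "\<And>u w. u \<in> A \<Longrightarrow> w \<in> A - {u} \<Longrightarrow> card (A - {u,w}) = card A - 2"
      by (subst card_Diff_subset) auto
    then show ?thesis by (intro sum.cong refl) auto
  qed
  also have "\<dots> = card A * (card A - 1) * (card A - 2)"
    using assms by simp
  finally show ?thesis .
qed

lemma card_dtri_XYY: assumes "finite X" "finite Y" "X \<inter> Y = {}"
  shows "card (dtri X Y Y) = card X * card Y * (card Y - 1)"
proof -
  have "card (dtri X Y Y) = (\<Sum>u\<in>X. \<Sum>w\<in>Y-{u}. card (Y - {u,w}))"
    unfolding dtri_Sigma using assms by (subst card_SigmaI) auto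
  also have "\<dots> = (\<Sum>u\<in>X. \<Sum>w\<in>Y. card Y - 1)"
  proof (rule sum.cong)
    fix u assume u: "u \<in> X"
    then have yu: "Y - {u} = Y" using assms by auto
    have h: "\<And>w. w \<in> Y \<Longrightarrow> card (Y - {u,w}) = card Y - 1"
    proof -
      fix w assume "w \<in> Y"
      then have "Y - {u,w} = Y - {w}" using u assms by auto
      then show "card (Y - {u,w}) = card Y - 1" using \<open>w\<in>Y\<close> by simp
    qed
    show "(\<Sum>w\<in>Y-{u}. card (Y - {u,w})) = (\<Sum>w\<in>Y. card Y - 1)"
      unfolding yu by (rule sum.cong[OF refl h])
  qed auto
  also have "\<dots> = card X * card Y * (card Y - 1)" by simp
  finally show ?thesis .
qed

lemma tri_ntri: "tri E A B C \<union> ntri E A B C = dtri A B C" "tri E A B C \<inter> ntri E A B C = {}"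
  unfolding tri_def ntri_def dtri_def by auto

lemma finite_dtri: "finite A \<Longrightarrow> finite B \<Longrightarrow> finite C \<Longrightarrow> finite (dtri A B C)"
  unfolding dtri_Sigma by auto

lemma card_tri_ntri: "finite A \<Longrightarrow> finite B \<Longrightarrow> finite C \<Longrightarrow>
   card (tri E A B C) + card (ntri E A B C) = card (dtri A B C)"
  by (metis card_Un_disjoint finite_Un finite_dtri tri_ntri)

lemma card_six: assumes "finite F" "\<forall>e\<in>F. card e = 3"
  shows "card {(u,w,z). u\<noteq>w \<and> u\<noteq>z \<and> w\<noteq>z \<and> {u,w,z}\<in>F} = 6 * card F"
proof -
  have eq: "{(u,w,z). u\<noteq>w \<and> u\<noteq>z \<and> w\<noteq>z \<and> {u,w,z}\<in>F} = (\<Union>e\<in>F. dtri e e e)"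
  proof (intro equalityI subsetI)
    fix t assume "t \<in> {(u,w,z). u\<noteq>w \<and> u\<noteq>z \<and> w\<noteq>z \<and> {u,w,z}\<in>F}"
    then obtain u w z where t: "t = (u,w,z)" "u\<noteq>w" "u\<noteq>z" "w\<noteq>z" "{u,w,z}\<in>F" by auto
    then have "t \<in> dtri {u,w,z} {u,w,z} {u,w,z}" unfolding dtri_def by auto
    then show "t \<in> (\<Union>e\<in>F. dtri e e e)" using t by blast
  next
    fix t assume "t \<in> (\<Union>e\<in>F. dtri e e e)"
    then obtain e where e: "e \<in> F" "t \<in> dtri e e e" by auto
    obtain u w z where "t = (u,w,z)" by (cases t) auto
    with e have t: "e \<in> F" "t = (u,w,z)" "(u,w,z) \<in> dtri e e e" by auto
    then have d: "u\<noteq>w" "u\<noteq>z" "w\<noteq>z" "{u,w,z} \<subseteq> e" unfolding dtri_def by auto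
    have "card e = 3" using assms t by auto
    then have "finite e" by (intro card_ge_0_finite) simp
    have "card {u,w,z} = 3" using d by simp
    then have "{u,w,z} = e" using card_subset_eq[OF \<open>finite e\<close> d(4)] \<open>card e = 3\<close> by simp
    then show "t \<in> {(u,w,z). u\<noteq>w \<and> u\<noteq>z \<and> w\<noteq>z \<and> {u,w,z}\<in>F}" using t d by auto
  qed
  have fin: "\<forall>e\<in>F. finite e" using assms by (metis card.infinite zero_neq_numeral)
  have "card (\<Union>e\<in>F. dtri e e e) = (\<Sum>e\<in>F. card (dtri e e e))"
  proof (rule card_UN_disjoint)
    show "\<forall>e\<in>F. finite (dtri e e e)" using fin finite_dtri by blast
    show "\<forall>i\<in>F. \<forall>j\<in>F. i \<noteq> j \<longrightarrow> dtri i i i \<inter> dtri j j j = {}"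
    proof (intro ballI impI)
      fix i j assume ij: "i \<in> F" "j \<in> F" "i \<noteq> j"
      show "dtri i i i \<inter> dtri j j j = {}"
      proof (rule ccontr)
        assume "dtri i i i \<inter> dtri j j j \<noteq> {}"
        then obtain u w z where d: "(u,w,z) \<in> dtri i i i" "(u,w,z) \<in> dtri j j j" by auto
        have c3: "card {u,w,z} = 3" using d unfolding dtri_def by auto
        have "{u,w,z} = i" using card_subset_eq[of i "{u,w,z}"] fin ij assms c3 d unfolding dtri_def by auto
        moreover have "{u,w,z} = j" using card_subset_eq[of j "{u,w,z}"] fin ij assms c3 d unfolding dtri_def by auto
        ultimately show False using ij by simp
      qed
    qed
  qed (use assms in auto)
  also have "\<dots> = (\<Sum>e\<in>F. 6)"
    using fin assms by (intro sum.cong) (auto simp: card_dtri_same)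
  finally show ?thesis using eq by simp
qed

lemma ntri_rot: "card (ntri E A B C) = card (ntri E C A B)"
proof -
  let ?r = "\<lambda>(u,w,z). (z,u,w)"
  have "inj ?r" by (auto simp: inj_def)
  moreover have "ntri E C A B = ?r ` ntri E A B C"
  proof (intro equalityI subsetI)
    fix t assume "t \<in> ntri E C A B"
    then obtain z u w where "t = (z,u,w)" "z\<in>C" "u\<in>A" "w\<in>B" "z\<noteq>u" "z\<noteq>w" "u\<noteq>w" "{z,u,w}\<notin>E"
      unfolding ntri_def by auto
    moreover have "{u,w,z} = {z,u,w}" by auto
    ultimately show "t \<in> ?r ` ntri E A B C" unfolding ntri_def by (auto intro!: image_eqI[where x="(u,w,z)"])
  next
    fix t assume "t \<in> ?r ` ntri E A B C"
    then obtain u w z where "t = (z,u,w)" "z\<in>C" "u\<in>A" "w\<in>B" "z\<noteq>u" "z\<noteq>w" "u\<noteq>w" "{u,w,z}\<notin>E"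
      unfolding ntri_def by auto
    moreover have "{u,w,z} = {z,u,w}" by auto
    ultimately show "t \<in> ntri E C A B" unfolding ntri_def by auto
  qed
  ultimately show ?thesis by (metis card_image inj_on_subset subset_UNIV)
qed

lemma codeg_eq: assumes "three_graph V E" "u\<in>V" "w\<in>V" "u\<noteq>w"
  shows "codeg E u w = card {z\<in>V - {u,w}. {u,w,z}\<in>E}"
proof -
  have "{e\<in>E. u \<in> e \<and> w \<in> e} = (\<lambda>z. {u,w,z}) ` {z\<in>V - {u,w}. {u,w,z}\<in>E}"
  proof (intro equalityI subsetI)
    fix e assume e: "e \<in> {e\<in>E. u \<in> e \<and> w \<in> e}"
    then have "card e = 3" "e \<subseteq> V" using assms(1) unfolding three_graph_def by auto
    then have "finite e" by (intro card_ge_0_finite) simp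
    have "card (e - {u,w}) = 1" using e assms(4) \<open>card e = 3\<close> by (subst card_Diff_subset) auto
    then obtain z where z: "e - {u,w} = {z}" by (erule card_1_singletonE)
    then have "e = {u,w,z}" using e by auto
    then show "e \<in> (\<lambda>z. {u,w,z}) ` {z\<in>V - {u,w}. {u,w,z}\<in>E}" using z e \<open>e \<subseteq> V\<close> by auto
  qed auto
  moreover have "inj_on (\<lambda>z. {u,w,z}) {z\<in>V - {u,w}. {u,w,z}\<in>E}"
    by (auto simp: inj_on_def insert_commute)
  ultimately show ?thesis unfolding codeg_def by (simp add: card_image)
qed



lemma finite_tri: "finite A \<Longrightarrow> finite B \<Longrightarrow> finite C \<Longrightarrow> finite (tri E A B C)"
  by (rule finite_subset[OF _ finite_dtri[of A B C]]) (auto simp: tri_def dtri_def)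
lemma finite_ntri: "finite A \<Longrightarrow> finite B \<Longrightarrow> finite C \<Longrightarrow> finite (ntri E A B C)"
  by (rule finite_subset[OF _ finite_dtri[of A B C]]) (auto simp: ntri_def dtri_def)

lemma tri_split: assumes "X \<inter> Y = {}" "finite A" "finite B" "finite X" "finite Y"
  shows "card (tri E A B (X \<union> Y)) = card (tri E A B X) + card (tri E A B Y)"
proof -
  have "tri E A B (X \<union> Y) = tri E A B X \<union> tri E A B Y" unfolding tri_def by auto
  moreover have "tri E A B X \<inter> tri E A B Y = {}" using assms(1) unfolding tri_def by auto
  ultimately show ?thesis using assms by (simp add: card_Un_disjoint finite_tri)
qed

lemma finite_E: "three_graph V E \<Longrightarrow> finite E"
proof -
  assume a: "three_graph V E"
  then have "E \<subseteq> Pow V" "finite V" unfolding three_graph_def by auto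
  then show "finite E" using finite_subset by blast
qed

lemma min_codeg_le: assumes "three_graph V E" "u\<in>V" "w\<in>V" "u\<noteq>w"
  shows "min_codeg V E \<le> codeg E u w"
proof -
  have "{codeg E x y | x y. x \<in> V \<and> y \<in> V \<and> x \<noteq> y} \<subseteq> (\<lambda>(x,y). codeg E x y) ` (V \<times> V)" by auto
  moreover have "finite V" using assms(1) unfolding three_graph_def by auto
  ultimately have "finite {codeg E x y | x y. x \<in> V \<and> y \<in> V \<and> x \<noteq> y}"
    using finite_subset by blast
  then show ?thesis unfolding min_codeg_def using assms by (intro Min_le) auto
qed

lemma tri_lower: assumes "three_graph V E" "A \<subseteq> V" "B \<subseteq> V"
  shows "min_codeg V E * (\<Sum>u\<in>A. card (B - {u})) \<le> card (tri E A B V)"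
proof -
  have fV: "finite V" using assms(1) unfolding three_graph_def by auto
  then have fA: "finite A" "finite B" using assms finite_subset by auto
  have "min_codeg V E * (\<Sum>u\<in>A. card (B - {u})) = (\<Sum>u\<in>A. \<Sum>w\<in>B-{u}. min_codeg V E)"
    by (simp add: sum_distrib_left mult.commute)
  also have "\<dots> \<le> (\<Sum>u\<in>A. \<Sum>w\<in>B-{u}. card {z\<in>V - {u,w}. {u,w,z}\<in>E})"
  proof (intro sum_mono)
    fix u w assume uw: "u \<in> A" "w \<in> B - {u}"
    then have uw': "u \<in> V" "w \<in> V" "u \<noteq> w" using assms by auto
    show "min_codeg V E \<le> card {z\<in>V - {u,w}. {u,w,z}\<in>E}"
      using min_codeg_le[OF assms(1) uw'] codeg_eq[OF assms(1) uw'] by simp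
  qed
  also have "\<dots> = card (tri E A B V)" using card_tri[OF fA fV] by simp
  finally show ?thesis .
qed

lemma tri_N2: assumes "three_graph V E" "X \<inter> Y = {}" "X \<union> Y = V"
  shows "card (tri E X X Y) \<le> 6 * num_XXY E X Y" "card (tri E X Y X) \<le> 6 * num_XXY E X Y"
proof -
  let ?F = "{e\<in>E. card (e \<inter> X) = 2 \<and> card (e \<inter> Y) = 1}"
  have fF: "finite ?F" using finite_E[OF assms(1)] by auto
  have c3: "\<forall>e\<in>?F. card e = 3" using assms(1) unfolding three_graph_def by auto
  have fV: "finite V" using assms(1) unfolding three_graph_def by auto
  let ?T = "{(u,w,z). u\<noteq>w \<and> u\<noteq>z \<and> w\<noteq>z \<and> {u,w,z}\<in>?F}"
  have "?T \<subseteq> V \<times> V \<times> V" using assms(1) unfolding three_graph_def by auto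
  then have fT: "finite ?T" using fV finite_subset by blast
  have "tri E X X Y \<subseteq> ?T"
  proof
    fix t assume "t \<in> tri E X X Y"
    then obtain u w z where t: "t = (u,w,z)" "u\<in>X" "w\<in>X" "z\<in>Y" "u\<noteq>w" "u\<noteq>z" "w\<noteq>z" "{u,w,z}\<in>E"
      unfolding tri_def by auto
    have "{u,w,z} \<inter> X = {u,w}" "{u,w,z} \<inter> Y = {z}" using t assms(2) by auto
    then show "t \<in> ?T" using t by simp
  qed
  then have "card (tri E X X Y) \<le> card ?T" using fT card_mono by blast
  then show "card (tri E X X Y) \<le> 6 * num_XXY E X Y" using card_six[OF fF c3] unfolding num_XXY_def by simp
  have "tri E X Y X \<subseteq> ?T"
  proof
    fix t assume "t \<in> tri E X Y X"
    then obtain u w z where t: "t = (u,w,z)" "u\<in>X" "w\<in>Y" "z\<in>X" "u\<noteq>w" "u\<noteq>z" "w\<noteq>z" "{u,w,z}\<in>E"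
      unfolding tri_def by auto
    have "{u,w,z} \<inter> X = {u,z}" "{u,w,z} \<inter> Y = {w}" using t assms(2) by auto
    then show "t \<in> ?T" using t by simp
  qed
  then have "card (tri E X Y X) \<le> card ?T" using fT card_mono by blast
  then show "card (tri E X Y X) \<le> 6 * num_XXY E X Y" using card_six[OF fF c3] unfolding num_XXY_def by simp
qed



lemma bip_bound: assumes "three_graph V E" "X \<inter> Y = {}" "X \<union> Y = V"
  shows "6 * card (bip X Y - E) \<le> card (ntri E X X X) + 3 * card (ntri E X Y Y)"
proof -
  let ?F = "bip X Y - E"
  have fV: "finite V" using assms(1) unfolding three_graph_def by auto
  then have fX: "finite X" "finite Y" using assms(3) by auto
  have "?F \<subseteq> Pow V" using assms(3) unfolding bip_def by auto
  then have fF: "finite ?F" using fV finite_subset by blast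
  have c3: "\<forall>e\<in>?F. card e = 3" unfolding bip_def by auto
  let ?T = "{(u,w,z). u\<noteq>w \<and> u\<noteq>z \<and> w\<noteq>z \<and> {u,w,z}\<in>?F}"
  have sub: "?T \<subseteq> ntri E X X X \<union> ntri E X Y Y \<union> ntri E Y X Y \<union> ntri E Y Y X"
  proof
    fix t assume "t \<in> ?T"
    then obtain u w z where t: "t = (u,w,z)" "u\<noteq>w" "u\<noteq>z" "w\<noteq>z" "{u,w,z} \<subseteq> X \<union> Y"
      "odd (card ({u,w,z} \<inter> X))" "{u,w,z} \<notin> E"
      unfolding bip_def by auto
    show "t \<in> ntri E X X X \<union> ntri E X Y Y \<union> ntri E Y X Y \<union> ntri E Y Y X"
      using t assms(2)
      by (cases "u\<in>X"; cases "w\<in>X"; cases "z\<in>X") (auto simp: ntri_def)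
  qed
  have "6 * card ?F = card ?T" using card_six[OF fF c3] by simp
  also have "\<dots> \<le> card (ntri E X X X \<union> ntri E X Y Y \<union> ntri E Y X Y \<union> ntri E Y Y X)"
    using sub fX by (intro card_mono) (auto intro: finite_ntri)
  also have "\<dots> \<le> card (ntri E X X X) + card (ntri E X Y Y) + card (ntri E Y X Y) + card (ntri E Y Y X)"
    by (meson card_Un_le add_le_mono le_refl order_trans)
  also have "\<dots> = card (ntri E X X X) + 3 * card (ntri E X Y Y)"
    using ntri_rot[of E Y X Y] ntri_rot[of E Y Y X] by simp
  finally show ?thesis .
qed

lemma G_bound: assumes "finite V" "D \<subseteq> V"
  shows "6 * card {e. e \<subseteq> V \<and> card e = 3 \<and> e \<inter> D \<noteq> {}} \<le> 3 * card D * card V ^ 2"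
proof -
  let ?F = "{e. e \<subseteq> V \<and> card e = 3 \<and> e \<inter> D \<noteq> {}}"
  have "?F \<subseteq> Pow V" by auto
  then have fF: "finite ?F" using assms finite_subset by blast
  have c3: "\<forall>e\<in>?F. card e = 3" by auto
  let ?T = "{(u,w,z). u\<noteq>w \<and> u\<noteq>z \<and> w\<noteq>z \<and> {u,w,z}\<in>?F}"
  have sub: "?T \<subseteq> (D \<times> V \<times> V) \<union> (V \<times> D \<times> V) \<union> (V \<times> V \<times> D)" by auto
  have fD: "finite D" using assms finite_subset by blast
  have "6 * card ?F = card ?T" using card_six[OF fF c3] by simp
  also have "\<dots> \<le> card ((D \<times> V \<times> V) \<union> (V \<times> D \<times> V) \<union> (V \<times> V \<times> D))"
    using sub fD assms by (intro card_mono) auto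
  also have "\<dots> \<le> card (D \<times> V \<times> V) + card (V \<times> D \<times> V) + card (V \<times> V \<times> D)"
    by (meson card_Un_le add_le_mono le_refl order_trans)
  also have "\<dots> = 3 * card D * card V ^ 2"
    by (simp add: card_cartesian_product power2_eq_square)
  finally show ?thesis .
qed

lemma move: assumes "three_graph V E" "X \<inter> Y = {}" "X \<union> Y = V" "D \<subseteq> V"
    "A = (X - D) \<union> (D - X)"
  shows "6 * card (bip A (V - A) - E) \<le> 6 * card (bip X Y - E) + 3 * card D * card V ^ 2"
proof -
  let ?G = "{e. e \<subseteq> V \<and> card e = 3 \<and> e \<inter> D \<noteq> {}}"
  have fV: "finite V" using assms(1) unfolding three_graph_def by auto
  have AV: "A \<subseteq> V" using assms by auto
  have sub: "bip A (V - A) - E \<subseteq> (bip X Y - E) \<union> ?G"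
  proof
    fix e assume e: "e \<in> bip A (V - A) - E"
    then have e1: "e \<subseteq> V" "card e = 3" "odd (card (e \<inter> A))" "e \<notin> E" using AV unfolding bip_def by auto
    show "e \<in> (bip X Y - E) \<union> ?G"
    proof (cases "e \<inter> D = {}")
      case True
      then have "e \<inter> A = e \<inter> X" using assms(5) by auto
      then show ?thesis using e1 assms(3) unfolding bip_def by auto
    next
      case False
      then show ?thesis using e1 by auto
    qed
  qed
  have f1: "finite (bip X Y - E)" using fV assms(3) unfolding bip_def
    by (metis (no_types, lifting) Collect_mono Pow_def finite_Diff finite_Pow_iff finite_subset)
  have "?G \<subseteq> Pow V" by auto
  then have f2: "finite ?G" using fV finite_subset by blast
  have "card (bip A (V - A) - E) \<le> card ((bip X Y - E) \<union> ?G)"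
    using sub f1 f2 by (intro card_mono) auto
  also have "\<dots> \<le> card (bip X Y - E) + card ?G" by (rule card_Un_le)
  finally have "6 * card (bip A (V - A) - E) \<le> 6 * card (bip X Y - E) + 6 * card ?G" by simp
  then show ?thesis using G_bound[OF fV assms(4)] by simp
qed



lemma arith_core:
  fixes g n a b m t3 x1 s x2 N nt3 nt12 :: real
  assumes g: "g > 0" "g < 1/100" and n: "n \<ge> 30" "n * g \<ge> 1" and ab: "a + b = n" "a \<ge> n/5" "b \<ge> n/5"
    and m: "m \<ge> (1/2 - g) * n"
    and h1: "m * (a*(a-1)) \<le> t3 + x1" and x1: "x1 \<le> 6*N" and N: "N < g^2 * n^3"
    and h2: "m * (a*b) \<le> x2 + s" and x2: "x2 \<le> 6*N"
    and h3: "t3 + nt3 = a*(a-1)*(a-2)" and h4: "s + nt12 = a*b*(b-1)"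
    and nn: "nt3 \<ge> 0" "nt12 \<ge> 0"
  shows "nt3 + 3*nt12 \<le> 6 * g * n^3" "a \<le> n/2 + 3/2 * g * n" "a \<ge> n/2 - 3 * g * n"
proof -
  define d where "d = (1/2 - g) * n"
  have npos: "n > 0" using n by simp
  have dpos: "d \<ge> 0" using g npos unfolding d_def by simp
  have P0: "a*(a-1) \<ge> n^2/30"
  proof -
    have "a \<ge> 6" using ab n by simp
    then have "a - 1 \<ge> 5/6 * a" by simp
    then have "a*(a-1) \<ge> a * (5/6*a)" using \<open>a\<ge>6\<close> by (intro mult_left_mono) auto
    moreover have "a*a \<ge> (n/5)*(n/5)" using ab npos by (intro mult_mono) auto
    ultimately show ?thesis by (simp add: power2_eq_square)
  qed
  have Q0: "a*b \<ge> 4*n^2/25"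
  proof -
    have "(a - n/5)*(b - n/5) \<ge> 0" using ab by simp
    moreover have "a*n + b*n = n*n" using ab(1) by (metis distrib_right)
    ultimately show ?thesis by (simp add: algebra_simps power2_eq_square)
  qed
  have Q1: "a*b \<le> n^2/4"
  proof -
    have "(a-b)^2 \<ge> 0" by simp
    moreover have "n*n = a*a + 2*(a*b) + b*b" using ab(1) by (auto simp: algebra_simps)
    ultimately show ?thesis by (simp add: algebra_simps power2_eq_square)
  qed
  have P0': "a*(a-1) \<ge> 0"
  proof -
    have "0 \<le> n^2/30" by simp
    then show ?thesis using P0 by linarith
  qed
  have Q0': "a*b \<ge> 0"
  proof -
    have "0 \<le> 4*n^2/25" by simp
    then show ?thesis using Q0 by linarith
  qed
  have mP: "m * (a*(a-1)) \<ge> d * (a*(a-1))" using m P0' unfolding d_def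
    by (intro mult_right_mono) auto
  have mQ: "m * (a*b) \<ge> d * (a*b)" using m Q0' unfolding d_def
    by (intro mult_right_mono) auto
  have g2: "g^2 \<le> g/100" using g by (simp add: power2_eq_square)
  have n3: "g^2 * n^3 \<le> g/100 * n^3" using g2 npos by (intro mult_right_mono) auto
  have A1: "a*(a-1)*(a-2-d) > -6*g^2*n^3"
  proof -
    have e: "a*(a-1)*(a-2-d) = (t3 + nt3) - d*(a*(a-1))" using h3 by (simp add: algebra_simps)
    show ?thesis using e nn mP h1 x1 N by linarith
  qed
  have A2: "a - 2 - d \<ge> -180*g^2*n"
  proof (rule ccontr)
    assume c: "\<not> ?thesis"
    have "180*g^2*n \<ge> 0" using npos by simp
    then have "a - 2 - d \<le> 0" using c by linarith
    then have "a*(a-1)*(a-2-d) \<le> (n^2/30) * (a-2-d)" using P0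
      by (intro mult_right_mono_neg) auto
    also have "\<dots> \<le> (n^2/30) * (-180*g^2*n)" using c npos
      by (intro mult_left_mono) auto
    finally show False using A1 by (simp add: power3_eq_cube power2_eq_square algebra_simps)
  qed
  have B1: "a*b*(b-1-d) \<ge> -6*g^2*n^3"
  proof -
    have e: "a*b*(b-1-d) = (s + nt12) - d*(a*b)" using h4 by (simp add: algebra_simps)
    show ?thesis using e nn mQ h2 x2 N by linarith
  qed
  have B2: "b - 1 - d \<ge> -(75/2)*g^2*n"
  proof (rule ccontr)
    assume c: "\<not> ?thesis"
    have "(75/2)*g^2*n \<ge> 0" using npos by simp
    then have "b - 1 - d \<le> 0" using c by linarith
    then have "a*b*(b-1-d) \<le> (4*n^2/25) * (b-1-d)" using Q0
      by (intro mult_right_mono_neg) auto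
    also have "\<dots> < (4*n^2/25) * (-(75/2)*g^2*n)" using c npos
      by (intro mult_strict_left_mono) auto
    finally show False using B1 by (simp add: power3_eq_cube power2_eq_square algebra_simps)
  qed
  have g2n: "g^2 * n \<le> g/100 * n" using g2 npos by (intro mult_right_mono) auto
  have dd: "d = n/2 - g*n" unfolding d_def by (simp add: algebra_simps)
  define G where "G = g*n"
  define H where "H = g^2*n"
  have e1: "-180*g^2*n = -180*H" "-(75/2)*g^2*n = -(75/2)*H" "3*g*n = 3*G" "3/2*g*n = 3/2*G"
     "g/100*n = G/100" "g^2*n = H" "g*n = G" unfolding G_def H_def by simp_all
  have G0: "G \<ge> 0" unfolding G_def using g npos by simp
  have alo: "a \<ge> n/2 - 3*g*n" using A2 g2n dd G0 unfolding e1 by linarith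
  have blo: "b \<ge> n/2 - 3/2*g*n" using B2 g2n dd G0 unfolding e1 by linarith
  show "a \<le> n/2 + 3/2 * g * n" using blo ab(1) by simp
  show "a \<ge> n/2 - 3 * g * n" by (rule alo)
  have C1: "nt3 \<le> a*(a-1)*(a-2-d) + 6*g^2*n^3"
  proof -
    have "nt3 = a*(a-1)*(a-2) - t3" using h3 by simp
    also have "\<dots> \<le> a*(a-1)*(a-2) - m*(a*(a-1)) + x1" using h1 by simp
    also have "\<dots> \<le> a*(a-1)*(a-2) - d*(a*(a-1)) + 6*g^2*n^3" using mP x1 N by simp
    finally show ?thesis by (simp add: algebra_simps)
  qed
  have C2: "a*(a-1)*(a-2-d) \<le> n^2 * (5/2*g*n)"
  proof -
    have e5: "5/2*g*n = 5/2*G" unfolding G_def by simp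
    have le: "a - 2 - d \<le> 5/2*g*n" using blo ab(1) dd G0 unfolding e1 e5 by linarith
    have a0: "a \<ge> 0" "a \<le> n" using ab npos by auto
    have "a*(a-1) \<le> a*a" using a0 by (simp add: algebra_simps)
    also have "a*a \<le> n*n" using a0 by (intro mult_mono) auto
    finally have "a*(a-1) \<le> n^2" by (simp add: power2_eq_square)
    have "a*(a-1)*(a-2-d) \<le> a*(a-1)*(5/2*g*n)" using le P0'
      by (intro mult_left_mono) auto
    also have "\<dots> \<le> n^2 * (5/2*g*n)" using \<open>a*(a-1) \<le> n^2\<close> g npos by (intro mult_right_mono) auto
    finally show ?thesis .
  qed
  have C3: "nt12 \<le> a*b*(b-1-d) + 6*g^2*n^3"
  proof -
    have "nt12 = a*b*(b-1) - s" using h4 by simp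
    also have "\<dots> \<le> a*b*(b-1) - m*(a*b) + x2" using h2 by simp
    also have "\<dots> \<le> a*b*(b-1) - d*(a*b) + 6*g^2*n^3" using mQ x2 N by simp
    finally show ?thesis by (simp add: algebra_simps)
  qed
  have C4: "a*b*(b-1-d) \<le> n^2/4 * (4*g*n)"
  proof -
    have e4: "4*g*n = 4*G" unfolding G_def by simp
    have le: "b - 1 - d \<le> 4*g*n" using alo ab(1) dd G0 unfolding e1 e4 by linarith
    have "a*b*(b-1-d) \<le> a*b*(4*g*n)" using le Q0'
      by (intro mult_left_mono) auto
    also have "\<dots> \<le> n^2/4 * (4*g*n)" using Q1 g npos by (intro mult_right_mono) auto
    finally show ?thesis .
  qed
  have "nt3 + 3*nt12 \<le> n^2 * (5/2*g*n) + 3 * (n^2/4 * (4*g*n)) + 24*g^2*n^3"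
    using C1 C2 C3 C4 by linarith
  also have "\<dots> \<le> 6 * g * n^3"
  proof -
    define K where "K = g*n^3"
    define L where "L = g^2*n^3"
    have f: "n^2 * (5/2*g*n) = 5/2*K" "3 * (n^2/4 * (4*g*n)) = 3*K" "24*g^2*n^3 = 24*L" "6 * g * n^3 = 6*K"
      "g/100 * n^3 = K/100"
      unfolding K_def L_def by (simp_all add: power3_eq_cube power2_eq_square algebra_simps)
    have "L \<le> K/100" using n3 f(5) unfolding L_def by linarith
    moreover have "K \<ge> 0" unfolding K_def using g npos by simp
    ultimately show ?thesis unfolding f by linarith
  qed
  finally show "nt3 + 3*nt12 \<le> 6 * g * n^3" .
qed



lemma core:
  fixes \<gamma> :: real and V :: "'a set"
  assumes tg: "three_graph V E" and cV: "card V = n" and mc: "real (min_codeg V E) \<ge> (1/2-\<gamma>)*real n"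
   and XY: "X\<inter>Y={}" "X\<union>Y=V" and cX: "real (card X) \<ge> real n/5" "real (card Y) \<ge> real n/5"
   and g: "0<\<gamma>" "\<gamma><1/100" and n: "real n \<ge> 30" "real n * \<gamma> \<ge> 1"
   and N: "real (num_XXY E X Y) < \<gamma>^2*real n^3"
  shows "extremal (3*\<gamma>) V E"
proof -
  have fV: "finite V" using tg unfolding three_graph_def by auto
  then have fX: "finite X" "finite Y" using XY by auto
  have ab: "card X + card Y = n" using card_Un_disjoint[OF fX XY(1)] XY(2) cV by simp
  have a6: "card X \<ge> 6" using cX n by linarith
  have b6: "card Y \<ge> 6" using cX n by linarith
  have XV: "X \<subseteq> V" "Y \<subseteq> V" using XY by auto
  have s1: "(\<Sum>u\<in>X. card (X - {u})) = card X * (card X - 1)"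
  proof -
    have "(\<Sum>u\<in>X. card (X - {u})) = (\<Sum>u\<in>X. card X - 1)" using fX by (intro sum.cong) auto
    then show ?thesis by simp
  qed
  have s2: "(\<Sum>u\<in>X. card (Y - {u})) = card X * card Y"
  proof -
    have "\<And>u. u \<in> X \<Longrightarrow> Y - {u} = Y" using XY(1) by auto
    then have "(\<Sum>u\<in>X. card (Y - {u})) = (\<Sum>u\<in>X. card Y)" by (intro sum.cong) auto
    then show ?thesis by simp
  qed
  have H1: "min_codeg V E * (card X * (card X - 1)) \<le> card (tri E X X V)"
    using tri_lower[OF tg XV(1) XV(1)] s1 by simp
  have H2: "min_codeg V E * (card X * card Y) \<le> card (tri E X Y V)"
    using tri_lower[OF tg XV(1) XV(2)] s2 by simp
  have H3: "card (tri E X X V) = card (tri E X X X) + card (tri E X X Y)"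
    using tri_split[OF XY(1) fX(1) fX(1) fX] XY(2) by simp
  have H4: "card (tri E X Y V) = card (tri E X Y X) + card (tri E X Y Y)"
    using tri_split[OF XY(1) fX(1) fX(2) fX] XY(2) by simp
  have H5: "card (tri E X X Y) \<le> 6 * num_XXY E X Y" "card (tri E X Y X) \<le> 6 * num_XXY E X Y"
    using tri_N2[OF tg XY] by auto
  have H6: "card (tri E X X X) + card (ntri E X X X) = card X * (card X - 1) * (card X - 2)"
    using card_tri_ntri[OF fX(1) fX(1) fX(1)] card_dtri_same[OF fX(1)] by simp
  have H7: "card (tri E X Y Y) + card (ntri E X Y Y) = card X * card Y * (card Y - 1)"
    using card_tri_ntri[OF fX(1) fX(2) fX(2)] card_dtri_XYY[OF fX XY(1)] by simp
  have H8: "6 * card (bip X Y - E) \<le> card (ntri E X X X) + 3 * card (ntri E X Y Y)"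
    using bip_bound[OF tg XY] .
  define a where "a = real (card X)"
  define b where "b = real (card Y)"
  have ra1: "real (card X - 1) = a - 1" "real (card X - 2) = a - 2" "real (card Y - 1) = b - 1"
    using a6 b6 unfolding a_def b_def by (auto simp: of_nat_diff)
  have R1: "real (min_codeg V E) * (a*(a-1)) \<le> real (card (tri E X X X)) + real (card (tri E X X Y))"
  proof -
    have "real (min_codeg V E * (card X * (card X - 1))) \<le> real (card (tri E X X X) + card (tri E X X Y))"
      using H1 H3 by (simp only: of_nat_le_iff)
    then show ?thesis using ra1 unfolding a_def by simp
  qed
  have R2: "real (min_codeg V E) * (a*b) \<le> real (card (tri E X Y X)) + real (card (tri E X Y Y))"
  proof -
    have "real (min_codeg V E * (card X * card Y)) \<le> real (card (tri E X Y X) + card (tri E X Y Y))"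
      using H2 H4 by (simp only: of_nat_le_iff)
    then show ?thesis unfolding a_def b_def by simp
  qed
  have R3: "real (card (tri E X X X)) + real (card (ntri E X X X)) = a*(a-1)*(a-2)"
  proof -
    have "real (card (tri E X X X) + card (ntri E X X X)) = real (card X * (card X - 1) * (card X - 2))"
      using H6 by simp
    then show ?thesis using ra1 unfolding a_def by simp
  qed
  have R4: "real (card (tri E X Y Y)) + real (card (ntri E X Y Y)) = a*b*(b-1)"
  proof -
    have "real (card (tri E X Y Y) + card (ntri E X Y Y)) = real (card X * card Y * (card Y - 1))"
      using H7 by simp
    then show ?thesis using ra1 unfolding a_def b_def by simp
  qed
  have R5a: "real (card (tri E X X Y)) \<le> real (6 * num_XXY E X Y)"
    "real (card (tri E X Y X)) \<le> real (6 * num_XXY E X Y)"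
    using H5 by (simp_all only: of_nat_le_iff)
  have R5: "real (card (tri E X X Y)) \<le> 6 * real (num_XXY E X Y)"
    "real (card (tri E X Y X)) \<le> 6 * real (num_XXY E X Y)"
    using R5a by simp_all
  have abn: "a + b = real n" using ab unfolding a_def b_def by (metis of_nat_add)
  note AC = arith_core[OF g n abn cX[folded a_def b_def] mc R1 R5(1) N R2 R5(2) R3 R4]
  have AC1: "real (card (ntri E X X X)) + 3 * real (card (ntri E X Y Y)) \<le> 6 * \<gamma> * real n ^ 3"
    using AC(1) by simp
  have R8: "6 * real (card (bip X Y - E)) \<le> real (card (ntri E X X X)) + 3 * real (card (ntri E X Y Y))"
  proof -
    have "real (6 * card (bip X Y - E)) \<le> real (card (ntri E X X X) + 3 * card (ntri E X Y Y))"
      using H8 by (simp only: of_nat_le_iff)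
    then show ?thesis by simp
  qed
  have div2: "2 * (n div 2) \<le> n" "n \<le> 2 * (n div 2) + 1" by auto
  then have "real (2 * (n div 2)) \<le> real n" "real n \<le> real (2 * (n div 2) + 1)"
    by (simp_all only: of_nat_le_iff)
  then have div2r: "2 * real (n div 2) \<le> real n" "real n \<le> 2 * real (n div 2) + 1"
    by simp_all
  define GN where "GN = \<gamma> * real n"
  have GN0: "GN \<ge> 0" unfolding GN_def using g by simp
  have gn: "3/2 * \<gamma> * real n = 3/2 * GN" "3 * \<gamma> * real n = 3 * GN" unfolding GN_def by simp_all
  have AC2: "a \<le> real n/2 + 3/2 * GN" "a \<ge> real n/2 - 3 * GN" using AC(2,3) unfolding gn by auto
  obtain D where D: "D \<subseteq> V" "card ((X - D) \<union> (D - X)) = n div 2" "real (card D) \<le> 3 * \<gamma> * real n + 1"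
  proof (cases "card X \<ge> n div 2")
    case True
    obtain D where d: "D \<subseteq> X" "card D = card X - n div 2" "finite D"
      using obtain_subset_with_card_n[of "card X - n div 2" X] by auto
    have "(X - D) \<union> (D - X) = X - D" using d by auto
    then have c: "card ((X - D) \<union> (D - X)) = n div 2" using d True fX by (simp add: card_Diff_subset)
    have "real (card D) = a - real (n div 2)" using d True unfolding a_def by (simp add: of_nat_diff)
    then have "real (card D) \<le> 3 * \<gamma> * real n + 1" using AC2 div2r GN0 unfolding gn by linarith
    moreover have "D \<subseteq> V" using d XV by blast
    ultimately show ?thesis using c by (intro that[of D]) auto
  next
    case False
    have "n div 2 - card X \<le> card Y" using ab by linarith
    then obtain D where d: "D \<subseteq> Y" "card D = n div 2 - card X" "finite D"
      using obtain_subset_with_card_n[of "n div 2 - card X" Y] by auto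
    have "(X - D) \<union> (D - X) = X \<union> D" using d XY(1) by auto
    moreover have "card (X \<union> D) = card X + card D" using d XY(1) fX by (intro card_Un_disjoint) auto
    ultimately have c: "card ((X - D) \<union> (D - X)) = n div 2" using d False by simp
    have "real (card D) = real (n div 2) - a" using d False unfolding a_def by (simp add: of_nat_diff)
    then have "real (card D) \<le> 3 * \<gamma> * real n + 1" using AC2 div2r GN0 unfolding gn by linarith
    moreover have "D \<subseteq> V" using d XV by blast
    ultimately show ?thesis using c by (intro that[of D]) auto
  qed
  define A where "A = (X - D) \<union> (D - X)"
  have AV: "A \<subseteq> V" using D XV unfolding A_def by auto
  have MV: "6 * card (bip A (V - A) - E) \<le> 6 * card (bip X Y - E) + 3 * card D * card V ^ 2"
    using move[OF tg XY D(1) A_def] .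
  have MVr: "6 * real (card (bip A (V - A) - E)) \<le> 6 * real (card (bip X Y - E)) + 3 * real (card D) * real n ^ 2"
  proof -
    have "real (6 * card (bip A (V - A) - E)) \<le> real (6 * card (bip X Y - E) + 3 * card D * card V ^ 2)"
      using MV by (simp only: of_nat_le_iff)
    then show ?thesis using cV by simp
  qed
  have npos: "real n > 0" using n by simp
  have kb: "3 * real (card D) * real n ^ 2 \<le> 3 * (3 * \<gamma> * real n + 1) * real n ^ 2"
    using D(3) npos by (intro mult_right_mono mult_left_mono) auto
  have n2: "real n ^ 2 \<le> \<gamma> * real n ^ 3"
  proof -
    have "real n ^ 2 * 1 \<le> real n ^ 2 * (real n * \<gamma>)" using n(2) by (intro mult_left_mono) auto
    then show ?thesis by (simp add: power3_eq_cube power2_eq_square algebra_simps)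
  qed
  have e: "3 * (3 * \<gamma> * real n + 1) * real n ^ 2 = 9 * (\<gamma> * real n ^ 3) + 3 * real n ^ 2"
    by (simp add: power3_eq_cube power2_eq_square algebra_simps)
  have e2: "6 * \<gamma> * real n ^ 3 = 6 * (\<gamma> * real n ^ 3)" by simp
  have fin: "real (card (bip A (V - A) - E)) \<le> 3 * \<gamma> * real n ^ 3"
  proof -
    have "6 * real (card (bip A (V - A) - E)) \<le> 18 * (\<gamma> * real n ^ 3)"
      using MVr R8 AC1 kb n2 unfolding e e2 by linarith
    then show ?thesis by simp
  qed
  show ?thesis unfolding extremal_def gamma_contains_def
  proof (intro exI conjI)
    show "A \<inter> (V - A) = {}" by auto
    show "A \<union> (V - A) = V" using AV by auto
    show "card A = card V div 2" using D(2) cV unfolding A_def by simp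
    have "card (V - A) = card V - card A" using AV fV finite_subset by (intro card_Diff_subset) auto
    then show "card (V - A) = card V - card V div 2" using D(2) cV unfolding A_def by simp
    show "real (card (bip A (V - A) - E)) \<le> 3 * \<gamma> * real (card V) ^ 3" using fin cV by simp
  qed
qed


theorem lemma3p3:
  fixes \<gamma> :: real
  assumes "0 < \<gamma>" and "\<gamma> < 1/100"
  shows "\<exists>n0::nat. \<forall>n\<ge>n0. \<forall>(V::nat set) E X Y.
     three_graph V E \<and> card V = n \<and>
     real (min_codeg V E) \<ge> (1/2 - \<gamma>) * real n \<and>
     X \<inter> Y = {} \<and> X \<union> Y = V \<and>
     real (card X) \<ge> real n / 5 \<and> real (card Y) \<ge> real n / 5 \<and>
     \<not> extremal (3 * \<gamma>) V E
     \<longrightarrow> real (num_XXY E X Y) \<ge> \<gamma>^2 * real n ^ 3 \<and>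
         real (num_XXY E Y X) \<ge> \<gamma>^2 * real n ^ 3"
proof (intro exI allI impI)
  fix n :: nat and V :: "nat set" and E X Y
  assume nn: "max 30 (nat \<lceil>1/\<gamma>\<rceil>) \<le> n"
  assume h: "three_graph V E \<and> card V = n \<and>
     real (min_codeg V E) \<ge> (1/2 - \<gamma>) * real n \<and>
     X \<inter> Y = {} \<and> X \<union> Y = V \<and>
     real (card X) \<ge> real n / 5 \<and> real (card Y) \<ge> real n / 5 \<and>
     \<not> extremal (3 * \<gamma>) V E"
  have n30: "real n \<ge> 30" using nn by simp
  have "real (nat \<lceil>1/\<gamma>\<rceil>) \<le> real n" using nn by linarith
  moreover have "1/\<gamma> \<le> real (nat \<lceil>1/\<gamma>\<rceil>)" by linarith
  ultimately have "1/\<gamma> \<le> real n" by linarith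
  then have ng: "real n * \<gamma> \<ge> 1" using assms(1) by (simp add: field_simps)
  have XY': "Y \<inter> X = {}" "Y \<union> X = V" using h by auto
  show "real (num_XXY E X Y) \<ge> \<gamma>^2 * real n ^ 3 \<and> real (num_XXY E Y X) \<ge> \<gamma>^2 * real n ^ 3"
  proof (intro conjI; rule ccontr)
    assume "\<not> \<gamma>^2 * real n ^ 3 \<le> real (num_XXY E X Y)"
    then have "real (num_XXY E X Y) < \<gamma>^2 * real n ^ 3" by simp
    then have "extremal (3 * \<gamma>) V E" using core[of V E n \<gamma> X Y] h assms n30 ng by blast
    then show False using h by blast
  next
    assume "\<not> \<gamma>^2 * real n ^ 3 \<le> real (num_XXY E Y X)"
    then have "real (num_XXY E Y X) < \<gamma>^2 * real n ^ 3" by simp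
    then have "extremal (3 * \<gamma>) V E" using core[of V E n \<gamma> Y X] h XY' assms n30 ng by blast
    then show False using h by blast
  qed
qed

end
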